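(* Let $\Gamma$ be a finite alphabet totally ordered via a valuation $v:\Gamma\to\mathbb{Z}$, and let $M_\Gamma$ be the set of $m$-words over $\Gamma$. Let $p,r\in\Gamma$ be arbitrary symbols and let $w_1,w_2$ be words over $\Gamma$ (one of which may be empty) such that $w=w_1\cdot p\cdot r\cdot p\cdot w_2\in M_\Gamma$. Then \[ w_1\cdot p\cdot r\cdot p\cdot w_2 \;=_{zip}\; w_1\cdot p\cdot w_2 . \]
   Context: $\Gamma$ is a finite set of symbols with a valuation $v:\Gamma\to\mathbb{Z}$ inducing a total order ($a<_\Gamma b$ iff $v(a)<v(b)$). An $m$-word is a word over $\Gamma$ of even (positive) length; $M_\Gamma$ is the set of all $m$-words, closed under concatenation $\cdot$. For $r,s\in\Gamma$ the distance is $\delta(r,s)=|v(r)-v(s)|$. The $\lambda$-length of an $m$-word $a_1a_2\cdots a_{2n}$ is the alternating sum $\lambda(a_1\cdots a_{2n})=-\delta(a_1,a_2)+\delta(a_2,a_3)-\delta(a_3,a_4)+\cdots-\delta(a_{2n-1},a_{2n})$. The compression relation $=_{zip}$ on $M_\Gamma$ is the equivalence relation obtained from the elementary rule: for all $p,r,s,t\in\Gamma$, $p\cdot r\cdot s\cdot t=_{zip}p\cdot t$ whenever $\lambda(p\cdot r\cdot s\cdot t)=\lambda(p\cdot t)$, applied iteratively to subwords and required to be preserved under concatenation: for all $w_1,w_2,w_3,w_4\in M_\Gamma$, if $w_1=_{zip}w_2$ and $w_3=_{zip}w_4$ then $w_1w_3=_{zip}w_2w_4$. *)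

theory Defs
  imports Main
begin

definition mwords :: "'a set \<Rightarrow> 'a list set" where
  "mwords \<Gamma> = {w. set w \<subseteq> \<Gamma> \<and> even (length w) \<and> length w > 0}"

definition sdist :: "('a \<Rightarrow> int) \<Rightarrow> 'a \<Rightarrow> 'a \<Rightarrow> int" where
  "sdist v r s = \<bar>v r - v s\<bar>"

fun lam :: "('a \<Rightarrow> int) \<Rightarrow> 'a list \<Rightarrow> int" where
  "lam v (a # b # c # rest) = - sdist v a b + sdist v b c + lam v (c # rest)"
| "lam v [a, b] = - sdist v a b"
| "lam v _ = 0"

inductive zipeq :: "'a set \<Rightarrow> ('a \<Rightarrow> int) \<Rightarrow> 'a list \<Rightarrow> 'a list \<Rightarrow> bool"
  for \<Gamma> :: "'a set" and v :: "'a \<Rightarrow> int" where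
  elem: "\<lbrakk>p \<in> \<Gamma>; r \<in> \<Gamma>; s \<in> \<Gamma>; t \<in> \<Gamma>; lam v [p, r, s, t] = lam v [p, t]\<rbrakk>
           \<Longrightarrow> zipeq \<Gamma> v [p, r, s, t] [p, t]"
| refl: "w \<in> mwords \<Gamma> \<Longrightarrow> zipeq \<Gamma> v w w"
| sym: "zipeq \<Gamma> v w1 w2 \<Longrightarrow> zipeq \<Gamma> v w2 w1"
| trans: "zipeq \<Gamma> v w1 w2 \<Longrightarrow> zipeq \<Gamma> v w2 w3 \<Longrightarrow> zipeq \<Gamma> v w1 w3"
| concat: "zipeq \<Gamma> v w1 w2 \<Longrightarrow> zipeq \<Gamma> v w3 w4 \<Longrightarrow> zipeq \<Gamma> v (w1 @ w3) (w2 @ w4)"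

end

theory Submission
  imports Defs
begin

lemma zl: "zipeq G v x y \<Longrightarrow> set u \<subseteq> G \<Longrightarrow> even (length u) \<Longrightarrow> zipeq G v (u @ x) (u @ y)"
proof (cases "u = []")
  case False
  assume "zipeq G v x y" "set u \<subseteq> G" "even (length u)"
  then have "zipeq G v u u" using False by (intro zipeq.refl) (auto simp: mwords_def)
  then show ?thesis using \<open>zipeq G v x y\<close> by (rule zipeq.concat)
qed simp

lemma zr: "zipeq G v x y \<Longrightarrow> set u \<subseteq> G \<Longrightarrow> even (length u) \<Longrightarrow> zipeq G v (x @ u) (y @ u)"
proof (cases "u = []")
  case False
  assume "zipeq G v x y" "set u \<subseteq> G" "even (length u)"
  then have "zipeq G v u u" using False by (intro zipeq.refl) (auto simp: mwords_def)
  then show ?thesis using \<open>zipeq G v x y\<close> by (intro zipeq.concat)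
qed simp

theorem proposition1:
  fixes \<Gamma> :: "'a set" and v :: "'a \<Rightarrow> int"
    and p r :: 'a and w1 w2 :: "'a list"
  assumes "finite \<Gamma>" and "inj_on v \<Gamma>"
    and "p \<in> \<Gamma>" and "r \<in> \<Gamma>"
    and "set w1 \<subseteq> \<Gamma>" and "set w2 \<subseteq> \<Gamma>"
    and "w1 @ [p, r, p] @ w2 \<in> mwords \<Gamma>"
  shows "zipeq \<Gamma> v (w1 @ [p, r, p] @ w2) (w1 @ [p] @ w2)"
proof (cases "even (length w1)")
  case True
  then have "odd (length w2)" using assms(7) by (auto simp: mwords_def)
  then obtain b w2' where w2: "w2 = b # w2'" by (cases w2) auto
  have e: "even (length w2')" using \<open>odd (length w2)\<close> w2 by simp
  have b: "b \<in> \<Gamma>" "set w2' \<subseteq> \<Gamma>" using assms(6) w2 by auto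
  have "zipeq \<Gamma> v [p, r, p, b] [p, b]"
    by (rule zipeq.elem) (use assms b in \<open>auto simp: sdist_def\<close>)
  then have "zipeq \<Gamma> v ([p, r, p, b] @ w2') ([p, b] @ w2')" using b(2) e by (rule zr)
  then have "zipeq \<Gamma> v (w1 @ [p, r, p, b] @ w2') (w1 @ [p, b] @ w2')"
    using assms(5) True by (rule zl)
  then show ?thesis using w2 by simp
next
  case False
  then obtain a w1' where w1: "w1 = w1' @ [a]" by (cases w1 rule: rev_cases) auto
  have e: "even (length w1')" using False w1 by simp
  then have "even (length w2)" using assms(7) w1 by (auto simp: mwords_def)
  have a: "a \<in> \<Gamma>" "set w1' \<subseteq> \<Gamma>" using assms(5) w1 by auto
  have "zipeq \<Gamma> v [a, p, r, p] [a, p]"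
    by (rule zipeq.elem) (use assms a in \<open>auto simp: sdist_def\<close>)
  then have "zipeq \<Gamma> v ([a, p, r, p] @ w2) ([a, p] @ w2)"
    using assms(6) \<open>even (length w2)\<close> by (rule zr)
  then have "zipeq \<Gamma> v (w1' @ [a, p, r, p] @ w2) (w1' @ [a, p] @ w2)"
    using a(2) e by (rule zl)
  then show ?thesis using w1 by simp
qed

end
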